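(* Let $s,t:\mathbb R\to(0,\infty)$ and real sequences $\{a_k\}_k$, $\{b_k\}_k$ satisfy \[ a_{k+1}\le\Big(1-\frac{1}{s(b_k)}\Big)a_k+\frac1{t(b_k)}\quad\text{for all }k. \] Assume: (1) there is an interval $I=(\iota,\infty)$ such that $s$ and $t$ are continuously differentiable on $I$, $s(x)>1$ for all $x\in I$, and $\kappa:=s/t$ is non-increasing and convex on $I$; (2) $b_k\to\infty$, there is $\mathsf B$ with $b_{k+1}\le b_k+\mathsf B$ for all $k$ sufficiently large, and $\sum_{k=0}^\infty1/s(b_k)=\infty$; (3) there is $\beta\in(0,1)$ with $\mathsf B[s'(x)-\kappa(x)t'(x)]\ge-1+\beta$ for all $x\in I$. Then $\limsup_{k\to\infty}a_k/\kappa(b_k)<\infty$. *)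

theory Defs
  imports "HOL-Analysis.Analysis"
begin

end

theory Submission
  imports Defs
begin

lemma key:
  fixes s t :: "real \<Rightarrow> real" and \<iota> B \<beta> x y :: real
  assumes s_pos: "\<And>x. s x > 0" and t_pos: "\<And>x. t x > 0"
    and s_C1: "s C1_differentiable_on {\<iota><..}"
    and t_C1: "t C1_differentiable_on {\<iota><..}"
    and kappa_antimono: "antimono_on {\<iota><..} (\<lambda>x. s x / t x)"
    and kappa_convex: "convex_on {\<iota><..} (\<lambda>x. s x / t x)"
    and beta: "0 < \<beta>" "\<beta> < 1"
    and deriv_cond: "\<And>x. x \<in> {\<iota><..} \<Longrightarrow>
        B * (deriv s x - (s x / t x) * deriv t x) \<ge> -1 + \<beta>"
    and x: "x > \<iota>" and y: "y > \<iota>" and xy: "y \<le> x + B"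
  shows "s y / t y \<ge> (s x / t x) * (1 - (1 - \<beta>) / s x)"
proof -
  define k where "k = (\<lambda>x. s x / t x)"
  have sx: "s x > 0" and tx: "t x > 0" using s_pos t_pos by auto
  have low: "(s x / t x) * (1 - (1 - \<beta>) / s x) \<le> s x / t x"
    using sx tx beta by (simp add: field_simps)
  show ?thesis
  proof (cases "y \<le> x")
    case True
    have "s x / t x \<le> s y / t y"
      using kappa_antimono x y True unfolding monotone_on_def by auto
    then show ?thesis using low by linarith
  next
    case False
    hence Bpos: "B > 0" using xy by simp
    have xB: "x + B > \<iota>" using x Bpos by simp
    have "s (x+B) / t (x+B) \<le> s y / t y"
      using kappa_antimono xB y xy unfolding monotone_on_def by auto
    have ds: "(s has_real_derivative deriv s x) (at x)"
      using s_C1 x unfolding C1_differentiable_on_eq DERIV_deriv_iff_real_differentiable by auto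
    have dt: "(t has_real_derivative deriv t x) (at x)"
      using t_C1 x unfolding C1_differentiable_on_eq DERIV_deriv_iff_real_differentiable by auto
    define d where "d = (deriv s x * t x - s x * deriv t x) / (t x * t x)"
    have dk: "((\<lambda>x. s x / t x) has_real_derivative d) (at x)"
      unfolding d_def by (rule DERIV_divide[OF ds dt]) (use tx in simp)
    have "s (x+B) / t (x+B) - s x / t x \<ge> d * ((x+B) - x)"
      by (rule convex_on_imp_above_tangent[OF kappa_convex])
         (use x xB dk in \<open>auto simp: interior_open has_field_derivative_at_within\<close>)
    moreover have "d = (deriv s x - (s x / t x) * deriv t x) / t x"
      unfolding d_def using tx by (simp add: field_simps)
    moreover have "B * (deriv s x - (s x / t x) * deriv t x) / t x \<ge> (-1 + \<beta>) / t x"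
      using deriv_cond[of x] x tx by (simp add: divide_right_mono)
    ultimately have "s (x+B) / t (x+B) \<ge> s x / t x + (-1 + \<beta>) / t x"
      by (simp add: algebra_simps)
    moreover have "s x / t x + (-1 + \<beta>) / t x = (s x / t x) * (1 - (1 - \<beta>) / s x)"
      using sx tx by (simp add: field_simps)
    ultimately show ?thesis using \<open>s (x+B) / t (x+B) \<le> s y / t y\<close> by linarith
  qed
qed
lemma step_bound:
  fixes a a1 k k1 \<sigma> M \<beta> :: real
  assumes "0 < \<sigma>" "\<sigma> < 1" "k > 0" "k1 > 0" "k1 \<ge> k * (1 - (1 - \<beta>) * \<sigma>)"
    "a1 \<le> (1 - \<sigma>) * a + k * \<sigma>" "a / k \<le> M" "M \<ge> 1 / \<beta>" "\<beta> > 0"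
  shows "a1 / k1 \<le> M"
proof -
  have M0: "M > 0" using assms(8,9) by (meson less_le_trans zero_less_divide_1_iff)
  have "a \<le> k * M" using assms(3,7) by (simp add: divide_le_eq mult.commute)
  hence "(1 - \<sigma>) * a \<le> (1 - \<sigma>) * (k * M)" using assms(2) by (intro mult_left_mono) auto
  hence "a1 \<le> k * ((1 - \<sigma>) * M + \<sigma>)" using assms(6) by (simp add: algebra_simps)
  moreover have "\<sigma> \<le> \<beta> * \<sigma> * M"
  proof -
    have "1 \<le> \<beta> * M" using assms(8,9) by (simp add: divide_le_eq mult.commute)
    thus ?thesis using assms(1) by (metis mult.assoc mult.commute mult_le_cancel_left1 less_le_not_le)
  qed
  hence "(1 - \<sigma>) * M + \<sigma> \<le> (1 - (1 - \<beta>) * \<sigma>) * M" by (simp add: algebra_simps)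
  hence "k * ((1 - \<sigma>) * M + \<sigma>) \<le> k * (1 - (1 - \<beta>) * \<sigma>) * M"
    using assms(3) by (simp add: mult.assoc)
  moreover have "k * (1 - (1 - \<beta>) * \<sigma>) * M \<le> k1 * M" using assms(5) M0 by simp
  ultimately have "a1 \<le> k1 * M" by linarith
  thus ?thesis using assms(4) by (simp add: divide_le_eq mult.commute)
qed
theorem lemma3p9:
  fixes s t :: "real \<Rightarrow> real" and a b :: "nat \<Rightarrow> real"
    and \<iota> B \<beta> :: real
  assumes s_pos: "\<And>x. s x > 0" and t_pos: "\<And>x. t x > 0"
    and rec: "\<And>k. a (Suc k) \<le> (1 - 1 / s (b k)) * a k + 1 / t (b k)"
    and s_C1: "s C1_differentiable_on {\<iota><..}"
    and t_C1: "t C1_differentiable_on {\<iota><..}"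
    and s_gt1: "\<And>x. x \<in> {\<iota><..} \<Longrightarrow> s x > 1"
    and kappa_antimono: "antimono_on {\<iota><..} (\<lambda>x. s x / t x)"
    and kappa_convex: "convex_on {\<iota><..} (\<lambda>x. s x / t x)"
    and b_lim: "filterlim b at_top sequentially"
    and b_step: "eventually (\<lambda>k. b (Suc k) \<le> b k + B) sequentially"
    and s_div: "\<not> summable (\<lambda>k. 1 / s (b k))"
    and beta: "0 < \<beta>" "\<beta> < 1"
    and deriv_cond: "\<And>x. x \<in> {\<iota><..} \<Longrightarrow>
        B * (deriv s x - (s x / t x) * deriv t x) \<ge> -1 + \<beta>"
  shows "limsup (\<lambda>k. ereal (a k / (s (b k) / t (b k)))) < \<infinity>"
  proof -
  define c where "c = (\<lambda>k. a k / (s (b k) / t (b k)))"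
  have ev1: "eventually (\<lambda>k. b k > \<iota>) sequentially"
    using b_lim by (simp add: filterlim_at_top_dense)
  have "eventually (\<lambda>k. b k > \<iota> \<and> b (Suc k) > \<iota> \<and> b (Suc k) \<le> b k + B) sequentially"
    using ev1 b_step ev1[THEN eventually_sequentially_Suc[THEN iffD2]] by eventually_elim auto
  then obtain N where N: "\<And>k. k \<ge> N \<Longrightarrow> b k > \<iota> \<and> b (Suc k) > \<iota> \<and> b (Suc k) \<le> b k + B"
    unfolding eventually_sequentially by blast
  define M where "M = max (c N) (1 / \<beta>)"
  have "c k \<le> M" if "k \<ge> N" for k
    using that
  proof (induction k rule: dec_induct)
    case base
    then show ?case by (simp add: M_def)
  next
    case (step k)
    have Nk: "b k > \<iota>" "b (Suc k) > \<iota>" "b (Suc k) \<le> b k + B" using N step(1) by auto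
    have sgt: "s (b k) > 1" using s_gt1 Nk by auto
    have kk: "s (b (Suc k)) / t (b (Suc k)) \<ge> (s (b k) / t (b k)) * (1 - (1 - \<beta>) / s (b k))"
      by (rule key[OF s_pos t_pos s_C1 t_C1 kappa_antimono kappa_convex beta deriv_cond Nk])
    have eq1: "1 / t (b k) = (s (b k) / t (b k)) * (1 / s (b k))"
      using s_pos[of "b k"] by (simp add: field_simps)
    have sp: "s (b k) > 0" "t (b k) > 0" "s (b (Suc k)) > 0" "t (b (Suc k)) > 0"
      using s_pos t_pos by auto
    have r: "a (Suc k) \<le> (1 - 1 / s (b k)) * a k + (s (b k) / t (b k)) * (1 / s (b k))"
      using rec[of k] eq1 by simp
    have kk': "s (b (Suc k)) / t (b (Suc k)) \<ge> (s (b k) / t (b k)) * (1 - (1 - \<beta>) * (1 / s (b k)))"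
      using kk by simp
    have M1: "M \<ge> 1 / \<beta>" unfolding M_def by simp
    show ?case unfolding c_def
      by (rule step_bound[OF _ _ _ _ kk' r _ M1 beta(1)])
         (use sgt sp step(3) in \<open>auto simp: c_def\<close>)
  qed
  hence "eventually (\<lambda>k. ereal (c k) \<le> ereal M) sequentially"
    unfolding eventually_sequentially by auto
  hence "limsup (\<lambda>k. ereal (c k)) \<le> ereal M" by (rule Limsup_bounded)
  moreover have "ereal M < \<infinity>" by simp
  ultimately have "limsup (\<lambda>k. ereal (c k)) < \<infinity>" by (rule le_less_trans)
  thus ?thesis by (simp add: c_def)
qed

end
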